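(* Let $L=(l_1,\dots,l_n)$, $n\ge 4$, be a generic length vector satisfying the strict triangle inequality. For any two vertices $V,V'$ of $\Gamma(L)$, there is a path in $\Gamma(L)$ of length at most $7$ from $V$ either to $V'$ or to the mirror image of $V'$.
   Context: Let $n\ge 4$ and $L=(l_1,\dots,l_n)$ be positive reals with $l_i<\sum_{j\ne i}l_j$ for every $i$ (strict triangle inequality), and generic: there is no $J\subseteq[n]$ with $\sum_{i\in J}l_i=\sum_{i\notin J}l_i$. Here $[n]=\{1,\dots,n\}$ and $|L|=\sum_{i=1}^n l_i$. A set $I\subseteq[n]$ is short if $\sum_{i\in I}l_i<|L|/2$ and long otherwise. A cyclically ordered partition of $[n]$ into $k$ parts is a sequence $(A_1,\dots,A_k)$ of pairwise disjoint nonempty sets with union $[n]$, considered up to cyclic shifts $(A_1,\dots,A_k)\sim(A_2,\dots,A_k,A_1)$; there is no ordering inside a part. It is admissible if every part is short. The graph $\Gamma(L)$ has as vertices the admissible cyclically ordered partitions of $[n]$ into 3 parts, written $(I,J,K)$, and as edges the admissible cyclically ordered partitions into 4 parts $(A,B,C,D)$; such an edge is incident to each of the partitions $(A\cup B,C,D)$, $(A,B\cup C,D)$, $(A,B,C\cup D)$, $(D\cup A,B,C)$ that is admissible. Equivalently, two vertices are adjacent iff one is obtained from the other by moving a nonempty proper subset of one part into another part. The length of a path is its number of edges. The mirror image of a vertex $(I,J,K)$ is the vertex $(J,I,K)$ (same parts, reversed cyclic order). *)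

theory Defs
  imports Complex_Main
begin

text \<open>Length vector: l :: nat => real, indices 1..n.\<close>

definition total_len :: "(nat \<Rightarrow> real) \<Rightarrow> nat \<Rightarrow> real" where
  "total_len l n = (\<Sum>i\<in>{1..n}. l i)"

definition short :: "(nat \<Rightarrow> real) \<Rightarrow> nat \<Rightarrow> nat set \<Rightarrow> bool" where
  "short l n S \<longleftrightarrow> (\<Sum>i\<in>S. l i) < total_len l n / 2"

definition is_opart :: "nat \<Rightarrow> nat set list \<Rightarrow> bool" where
  "is_opart n ps \<longleftrightarrow> (\<forall>p\<in>set ps. p \<noteq> {}) \<and> \<Union>(set ps) = {1..n} \<and>
     (\<forall>i<length ps. \<forall>j<length ps. i \<noteq> j \<longrightarrow> ps ! i \<inter> ps ! j = {})"

definition admissible :: "(nat \<Rightarrow> real) \<Rightarrow> nat \<Rightarrow> nat set list \<Rightarrow> bool" where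
  "admissible l n ps \<longleftrightarrow> is_opart n ps \<and> (\<forall>p\<in>set ps. short l n p)"

text \<open>A cyclically ordered partition = the class of a list under cyclic shifts.\<close>
definition cyc :: "nat set list \<Rightarrow> nat set list set" where
  "cyc ps = {rotate k ps | k. True}"

definition gamma_vertices :: "(nat \<Rightarrow> real) \<Rightarrow> nat \<Rightarrow> nat set list set set" where
  "gamma_vertices l n = {cyc ps | ps. length ps = 3 \<and> admissible l n ps}"

fun merges :: "nat set list \<Rightarrow> nat set list set" where
  "merges [A, B, C, D] = {[A \<union> B, C, D], [A, B \<union> C, D], [A, B, C \<union> D], [D \<union> A, B, C]}"
| "merges _ = {}"

text \<open>V and W are adjacent iff some edge (admissible cyclic 4-partition) is incident to both.\<close>
definition gamma_adj :: "(nat \<Rightarrow> real) \<Rightarrow> nat \<Rightarrow> nat set list set \<Rightarrow> nat set list set \<Rightarrow> bool" where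
  "gamma_adj l n V W \<longleftrightarrow> V \<noteq> W \<and> (\<exists>ps. length ps = 4 \<and> admissible l n ps \<and>
      (\<exists>q\<in>merges ps. admissible l n q \<and> cyc q = V) \<and>
      (\<exists>q\<in>merges ps. admissible l n q \<and> cyc q = W))"

text \<open>Mirror image: reverse the cyclic order; cyc [I,J,K] maps to cyc [K,J,I] = cyc [J,I,K].\<close>
definition mirror :: "nat set list set \<Rightarrow> nat set list set" where
  "mirror V = rev ` V"

definition path_le :: "(nat \<Rightarrow> real) \<Rightarrow> nat \<Rightarrow> nat \<Rightarrow> nat set list set \<Rightarrow> nat set list set \<Rightarrow> bool" where
  "path_le l n m V W \<longleftrightarrow> (\<exists>k\<le>m. \<exists>p :: nat \<Rightarrow> nat set list set.
      p 0 = V \<and> p k = W \<and> (\<forall>i<k. gamma_adj l n (p i) (p (Suc i))))"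

end

theory Submission
  imports Defs
begin


lemma adm3: "admissible l n [A,B,C] \<longleftrightarrow> A\<noteq>{} \<and> B\<noteq>{} \<and> C\<noteq>{} \<and> A\<union>B\<union>C = {1..n} \<and>
  A\<inter>B={} \<and> A\<inter>C={} \<and> B\<inter>C={} \<and> short l n A \<and> short l n B \<and> short l n C"
  unfolding admissible_def is_opart_def
  by (auto simp: less_Suc_eq numeral_eq_Suc nth_Cons' all_conj_distrib)
lemma adm4: "admissible l n [A,B,C,D] \<longleftrightarrow> A\<noteq>{} \<and> B\<noteq>{} \<and> C\<noteq>{} \<and> D\<noteq>{} \<and> A\<union>B\<union>C\<union>D = {1..n} \<and>
  A\<inter>B={} \<and> A\<inter>C={} \<and> A\<inter>D={} \<and> B\<inter>C={} \<and> B\<inter>D={} \<and> C\<inter>D={} \<and> short l n A \<and> short l n B \<and> short l n C \<and> short l n D"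
  unfolding admissible_def is_opart_def
  by (auto simp: less_Suc_eq numeral_eq_Suc nth_Cons' all_conj_distrib)
lemma cyc3: "cyc [a,b,c] = {[a,b,c],[b,c,a],[c,a,b]}"
proof -
  have "rotate k [a,b,c] = rotate (k mod 3) [a,b,c]" for k
    by (metis length_Cons list.size(3) numeral_3_eq_3 rotate_conv_mod)
  moreover have "k mod 3 = 0 \<or> k mod 3 = 1 \<or> k mod 3 = (2::nat)" for k by presburger
  ultimately have 1: "rotate k [a,b,c] \<in> {[a,b,c],[b,c,a],[c,a,b]}" for k
    by (metis (no_types) insertCI rotate0 id_apply rotate_Suc rotate1.simps(2) append.simps numeral_2_eq_2 One_nat_def)
  have "rotate 1 [a,b,c] = [b,c,a]" "rotate 2 [a,b,c] = [c,a,b]" by (simp_all add: numeral_2_eq_2)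
  then show ?thesis unfolding cyc_def using 1 by (auto intro: exI[of _ 0] exI[of _ 1] exI[of _ 2] simp del: rotate_Suc)
qed


lemma mirror3: "mirror (cyc [a,b,c]) = cyc [b,a,c]"
  unfolding mirror_def cyc3 by auto
lemma cyc_rot: "cyc [a,b,c] = cyc [b,c,a]" unfolding cyc3 by auto
lemma short_mono: "A \<subseteq> B \<Longrightarrow> B \<subseteq> {1..n} \<Longrightarrow> \<forall>i\<in>{1..n}. 0<l i \<Longrightarrow> short l n B \<Longrightarrow> short l n A"
  unfolding short_def
proof -
  assume a: "A \<subseteq> B" "B \<subseteq> {1..n}" "\<forall>i\<in>{1..n}. 0<l i" "sum l B < total_len l n / 2"
  have "finite B" using a(2) finite_subset by blast
  have "\<forall>i\<in>B-A. 0 \<le> l i" using a(2,3) by (meson DiffD1 less_imp_le subsetD)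
  then have "sum l A \<le> sum l B" using a \<open>finite B\<close> by (intro sum_mono2) auto
  then show "sum l A < total_len l n / 2" using a by linarith
qed

lemma adm3D: assumes "admissible l n [X,Y,Z]"
  shows "X\<noteq>{}" "Y\<noteq>{}" "Z\<noteq>{}" "X\<union>Y\<union>Z = {1..n}" "X\<inter>Y={}" "X\<inter>Z={}" "Y\<inter>Z={}"
    "short l n X" "short l n Y" "short l n Z"
  using assms unfolding adm3 by auto

lemma cyc_ne:
  assumes "admissible l n [X,Y,Z]" "[X',Y',Z'] \<in> cyc [X,Y,Z]"
  shows "X' = X \<or> Z' = X \<or> Y' = X"
  using assms(2) unfolding cyc3 by auto

lemma uhelp1: "X\<union>Y\<union>Z = U \<Longrightarrow> S\<subseteq>X \<Longrightarrow> (X-S)\<union>S\<union>Y\<union>Z = U" by blast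
lemma uhelp2: "X\<union>Y\<union>Z = U \<Longrightarrow> S\<subseteq>X \<Longrightarrow> S\<union>(X-S)\<union>Y\<union>Z = U" by blast
lemma uhelp3: "X\<union>Y\<union>Z = U \<Longrightarrow> S\<subseteq>X \<Longrightarrow> (X-S)\<union>(Y\<union>S)\<union>Z = U" by blast
lemma uhelp4: "X\<union>Y\<union>Z = U \<Longrightarrow> S\<subseteq>X \<Longrightarrow> (X-S)\<union>Y\<union>(Z\<union>S) = U" by blast
lemma uhelp5: "X\<union>Y\<union>Z = U \<Longrightarrow> S\<subseteq>X \<Longrightarrow> (Z\<union>S)\<union>(X-S)\<union>Y = U" by blast

lemma mv_common:
  assumes pos: "\<forall>i\<in>{1..n}. 0<l i" and adm: "admissible l n [X,Y,Z]"
    and S: "S \<subseteq> X" "S \<noteq> {}" "S \<noteq> X"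
  shows "admissible l n [X-S,S,Y,Z]" "admissible l n [S,X-S,Y,Z]"
    "X-S \<noteq> {}" "(X-S)\<inter>Y = {}" "(X-S)\<inter>Z = {}" "S\<inter>Y={}" "S\<inter>Z={}" "short l n (X-S)"
proof -
  note f = adm3D[OF adm]
  have X1: "X \<subseteq> {1..n}" using f(4) by blast
  have s1: "short l n (X-S)" "short l n S"
    using short_mono[OF _ X1 pos] f(8) S(1) by auto
  have g1: "X-S \<noteq> {}" using S by blast
  have g2: "(X-S)\<union>S\<union>Y\<union>Z = {1..n}" using f(4) S(1) by (rule uhelp1)
  have g2': "S\<union>(X-S)\<union>Y\<union>Z = {1..n}" using f(4) S(1) by (rule uhelp2)
  have g3: "(X-S)\<inter>S={}" "S\<inter>(X-S)={}" by blast+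
  have g4: "(X-S)\<inter>Y={}" "(X-S)\<inter>Z={}" using f(5,6) by blast+
  have g5: "S\<inter>Y={}" "S\<inter>Z={}" using f(5,6) S(1) by blast+
  show "admissible l n [X-S,S,Y,Z]" unfolding adm4 by (intro conjI) (fact f g1 g2 g3 g4 g5 S s1)+
  show "admissible l n [S,X-S,Y,Z]" unfolding adm4 by (intro conjI) (fact f g1 g2' g3 g4 g5 S s1)+
  show "X-S \<noteq> {}" "(X-S)\<inter>Y = {}" "(X-S)\<inter>Z = {}" "S\<inter>Y={}" "S\<inter>Z={}" "short l n (X-S)"
    by (fact g1 g4 g5 s1)+
qed

lemma mv1:
  assumes pos: "\<forall>i\<in>{1..n}. 0<l i" and adm: "admissible l n [X,Y,Z]"
    and S: "S \<subseteq> X" "S \<noteq> {}" "S \<noteq> X" and sh: "short l n (Y \<union> S)"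
  shows "gamma_adj l n (cyc [X,Y,Z]) (cyc [X-S,Y\<union>S,Z]) \<and> admissible l n [X-S,Y\<union>S,Z]"
proof -
  note f = adm3D[OF adm]
  note c = mv_common[OF pos adm S]
  have u: "(X-S)\<union>(Y\<union>S)\<union>Z = {1..n}" using f(4) S(1) by (rule uhelp3)
  have d1: "(X-S)\<inter>(Y\<union>S) = {}" using c(4) by blast
  have d2: "(Y\<union>S)\<inter>Z = {}" using f(7) c(7) by blast
  have d3: "Y\<union>S \<noteq> {}" using f(2) by blast
  note d = d1 d2 d3
  have a2: "admissible l n [X-S,Y\<union>S,Z]" unfolding adm3 by (intro conjI) (fact f c u d sh)+
  have q1: "[X,Y,Z] \<in> merges [X-S,S,Y,Z]" using S(1) by (simp add: Un_absorb2)
  have q2: "[X-S,Y\<union>S,Z] \<in> merges [X-S,S,Y,Z]" by (simp add: Un_commute)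
  have ne: "cyc [X,Y,Z] \<noteq> cyc [X-S,Y\<union>S,Z]"
  proof
    assume "cyc [X,Y,Z] = cyc [X-S,Y\<union>S,Z]"
    then have "[X-S,Y\<union>S,Z] \<in> cyc [X,Y,Z]" unfolding cyc3 by simp
    from cyc_ne[OF adm this] show False
    proof (elim disjE)
      assume "X - S = X" then show False using S(1,2) by blast
    next
      assume "Z = X" then show False using f(1,6) by simp
    next
      assume "Y \<union> S = X" then show False using f(2,5) S(1) by blast
    qed
  qed
  have "gamma_adj l n (cyc [X,Y,Z]) (cyc [X-S,Y\<union>S,Z])" unfolding gamma_adj_def
  proof (intro conjI exI[of _ "[X-S,S,Y,Z]"])
    show "cyc [X,Y,Z] \<noteq> cyc [X-S,Y\<union>S,Z]" by (rule ne)
    show "length [X-S,S,Y,Z] = 4" by simp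
    show "admissible l n [X-S,S,Y,Z]" by (rule c(1))
    show "\<exists>q\<in>merges [X-S,S,Y,Z]. admissible l n q \<and> cyc q = cyc [X,Y,Z]" using q1 adm by blast
    show "\<exists>q\<in>merges [X-S,S,Y,Z]. admissible l n q \<and> cyc q = cyc [X-S,Y\<union>S,Z]" using q2 a2 by blast
  qed
  then show ?thesis using a2 by blast
qed

lemma mv2:
  assumes pos: "\<forall>i\<in>{1..n}. 0<l i" and adm: "admissible l n [X,Y,Z]"
    and S: "S \<subseteq> X" "S \<noteq> {}" "S \<noteq> X" and sh: "short l n (Z \<union> S)"
  shows "gamma_adj l n (cyc [X,Y,Z]) (cyc [X-S,Y,Z\<union>S]) \<and> admissible l n [X-S,Y,Z\<union>S]"
proof -
  note f = adm3D[OF adm]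
  note c = mv_common[OF pos adm S]
  have u: "(X-S)\<union>Y\<union>(Z\<union>S) = {1..n}" using f(4) S(1) by (rule uhelp4)
  have u': "(Z\<union>S)\<union>(X-S)\<union>Y = {1..n}" using f(4) S(1) by (rule uhelp5)
  have d1: "(X-S)\<inter>(Z\<union>S) = {}" "(Z\<union>S)\<inter>(X-S) = {}" using c(5) by blast+
  have d2: "Y\<inter>(Z\<union>S) = {}" "(Z\<union>S)\<inter>Y = {}" using f(7) c(6) by blast+
  have d3: "Z\<union>S \<noteq> {}" using f(3) by blast
  note d = d1 d2 d3
  have a2: "admissible l n [X-S,Y,Z\<union>S]" unfolding adm3 by (intro conjI) (fact f c u d sh)+
  have a3: "admissible l n [Z\<union>S,X-S,Y]" unfolding adm3 by (intro conjI) (fact f c u' d sh)+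
  have sx: "S \<union> X = X" using S(1) by blast
  have q1: "[X,Y,Z] \<in> merges [S,X-S,Y,Z]" by (simp add: sx)
  have q2: "[Z\<union>S,X-S,Y] \<in> merges [S,X-S,Y,Z]" by simp
  have cc: "cyc [Z\<union>S,X-S,Y] = cyc [X-S,Y,Z\<union>S]" unfolding cyc3 by auto
  have ne: "cyc [X,Y,Z] \<noteq> cyc [X-S,Y,Z\<union>S]"
  proof
    assume "cyc [X,Y,Z] = cyc [X-S,Y,Z\<union>S]"
    then have "[X-S,Y,Z\<union>S] \<in> cyc [X,Y,Z]" unfolding cyc3 by simp
    from cyc_ne[OF adm this] show False
    proof (elim disjE)
      assume "X - S = X" then show False using S(1,2) by blast
    next
      assume "Z \<union> S = X" then show False using f(3,6) S(1) by blast
    next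
      assume "Y = X" then show False using f(1,5) by simp
    qed
  qed
  have "gamma_adj l n (cyc [X,Y,Z]) (cyc [X-S,Y,Z\<union>S])" unfolding gamma_adj_def
  proof (intro conjI exI[of _ "[S,X-S,Y,Z]"])
    show "cyc [X,Y,Z] \<noteq> cyc [X-S,Y,Z\<union>S]" by (rule ne)
    show "length [S,X-S,Y,Z] = 4" by simp
    show "admissible l n [S,X-S,Y,Z]" by (rule c(2))
    show "\<exists>q\<in>merges [S,X-S,Y,Z]. admissible l n q \<and> cyc q = cyc [X,Y,Z]" using q1 adm by blast
    show "\<exists>q\<in>merges [S,X-S,Y,Z]. admissible l n q \<and> cyc q = cyc [X-S,Y,Z\<union>S]" using q2 a3 cc by metis
  qed
  then show ?thesis using a2 by blast
qed



lemma len3: "length ps = 3 \<Longrightarrow> \<exists>a b c. ps = [a,b,c]"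
  by (auto simp: length_Suc_conv numeral_eq_Suc)
lemma len4: "length ps = 4 \<Longrightarrow> \<exists>a b c d. ps = [a,b,c,d]"
  by (auto simp: length_Suc_conv numeral_eq_Suc)

lemma adm_rev: assumes "admissible l n [a,b,c]" shows "admissible l n [c,b,a]"
proof -
  note f = adm3D[OF assms]
  have u: "c\<union>b\<union>a = {1..n}" using f(4) by blast
  have d: "c\<inter>b = {}" "c\<inter>a = {}" "b\<inter>a={}" using f(5,6,7) by blast+
  show ?thesis unfolding adm3 by (intro conjI) (fact f u d)+
qed
lemma adm_rot: assumes "admissible l n [a,b,c]" shows "admissible l n [b,c,a]"
proof -
  note f = adm3D[OF assms]
  have u: "b\<union>c\<union>a = {1..n}" using f(4) by blast
  have d: "c\<inter>a = {}" "b\<inter>a={}" using f(5,6) by blast+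
  show ?thesis unfolding adm3 by (intro conjI) (fact f u d)+
qed
lemma adm4_rev: assumes "admissible l n [A,B,C,D]" shows "admissible l n [D,C,B,A]"
proof -
  have f: "A\<noteq>{}" "B\<noteq>{}" "C\<noteq>{}" "D\<noteq>{}" "A\<union>B\<union>C\<union>D = {1..n}"
    "A\<inter>B={}" "A\<inter>C={}" "A\<inter>D={}" "B\<inter>C={}" "B\<inter>D={}" "C\<inter>D={}"
    "short l n A" "short l n B" "short l n C" "short l n D" using assms unfolding adm4 by auto
  have u: "D\<union>C\<union>B\<union>A = {1..n}" using f(5) by blast
  have d: "D\<inter>C={}" "D\<inter>B={}" "D\<inter>A={}" "C\<inter>B={}" "C\<inter>A={}" "B\<inter>A={}"
    using f(6-11) by blast+
  show ?thesis unfolding adm4 by (intro conjI) (fact f u d)+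
qed
lemma mirror_rev3: "mirror (cyc [a,b,c]) = cyc [c,b,a]"
  unfolding mirror_def cyc3 by auto
lemma mirror_mirror: "mirror (mirror V) = V"
  unfolding mirror_def by (simp add: image_image)

lemma merges_mirror:
  assumes "q \<in> merges [A,B,C,D]" "admissible l n q"
  shows "\<exists>q'\<in>merges [D,C,B,A]. admissible l n q' \<and> cyc q' = mirror (cyc q)"
proof -
  from assms(1) have "q = [A\<union>B,C,D] \<or> q = [A,B\<union>C,D] \<or> q = [A,B,C\<union>D] \<or> q = [D\<union>A,B,C]" by simp
  then show ?thesis
  proof (elim disjE)
    assume q: "q = [A\<union>B,C,D]"
    show ?thesis
      by (rule bexI[of _ "[D,C,B\<union>A]"]) (use adm_rev[of l n "A\<union>B" C D] assms(2) q in \<open>simp_all add: mirror_rev3 Un_commute\<close>)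
  next
    assume q: "q = [A,B\<union>C,D]"
    show ?thesis
      by (rule bexI[of _ "[D,C\<union>B,A]"]) (use adm_rev[of l n A "B\<union>C" D] assms(2) q in \<open>simp_all add: mirror_rev3 Un_commute\<close>)
  next
    assume q: "q = [A,B,C\<union>D]"
    show ?thesis
      by (rule bexI[of _ "[D\<union>C,B,A]"]) (use adm_rev[of l n A B "C\<union>D"] assms(2) q in \<open>simp_all add: mirror_rev3 Un_commute\<close>)
  next
    assume q: "q = [D\<union>A,B,C]"
    have a: "admissible l n [A\<union>D,C,B]" using adm_rot[OF adm_rot[OF adm_rev[of l n "D\<union>A" B C]]] assms(2) q
      by (simp add: Un_commute)
    have c: "cyc [A\<union>D,C,B] = mirror (cyc q)" unfolding q mirror_rev3 using cyc_rot[of "A\<union>D" C B] by (simp add: Un_commute)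
    show ?thesis
      by (rule bexI[of _ "[A\<union>D,C,B]"]) (use a c in simp_all)
  qed
qed

lemma adj_mirror: assumes "gamma_adj l n V W" shows "gamma_adj l n (mirror V) (mirror W)"
proof -
  from assms obtain ps where ps: "length ps = 4" "admissible l n ps"
    and q1: "\<exists>q\<in>merges ps. admissible l n q \<and> cyc q = V"
    and q2: "\<exists>q\<in>merges ps. admissible l n q \<and> cyc q = W" and ne: "V \<noteq> W"
    unfolding gamma_adj_def by blast
  from len4[OF ps(1)] obtain A B C D where e: "ps = [A,B,C,D]" by blast
  have a4: "admissible l n [D,C,B,A]" using ps(2) unfolding e by (rule adm4_rev)
  have m1: "\<exists>q'\<in>merges [D,C,B,A]. admissible l n q' \<and> cyc q' = mirror V"
    using q1 merges_mirror unfolding e by blast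
  have m2: "\<exists>q'\<in>merges [D,C,B,A]. admissible l n q' \<and> cyc q' = mirror W"
    using q2 merges_mirror unfolding e by blast
  have "mirror V \<noteq> mirror W" using ne mirror_mirror by metis
  then show ?thesis unfolding gamma_adj_def using a4 m1 m2 by (intro conjI exI[of _ "[D,C,B,A]"]) auto
qed

lemma adj_sym: "gamma_adj l n V W \<Longrightarrow> gamma_adj l n W V"
  unfolding gamma_adj_def by blast

lemma path_refl: "path_le l n k V V"
  unfolding path_le_def
  apply (rule exI[of _ 0], rule conjI, simp)
  apply (rule exI[of _ "\<lambda>_. V"]) by simp

lemma path_adj: "gamma_adj l n V W \<Longrightarrow> path_le l n 1 V W"
  unfolding path_le_def
  apply (rule exI[of _ 1], rule conjI, simp)
  apply (rule exI[of _ "\<lambda>i. if i = 0 then V else W"]) by simp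

lemma path_mono: "path_le l n k V W \<Longrightarrow> k \<le> k' \<Longrightarrow> path_le l n k' V W"
  unfolding path_le_def by (blast intro: order_trans)

lemma path_trans:
  assumes "path_le l n a U V" "path_le l n b V W" shows "path_le l n (a+b) U W"
proof -
  from assms(1) obtain k1 p1 where 1: "k1 \<le> a" "p1 0 = U" "p1 k1 = V" "\<forall>i<k1. gamma_adj l n (p1 i) (p1 (Suc i))"
    unfolding path_le_def by blast
  from assms(2) obtain k2 p2 where 2: "k2 \<le> b" "p2 0 = V" "p2 k2 = W" "\<forall>i<k2. gamma_adj l n (p2 i) (p2 (Suc i))"
    unfolding path_le_def by blast
  define p where "p i = (if i \<le> k1 then p1 i else p2 (i - k1))" for i
  have "p 0 = U" using 1 by (simp add: p_def)
  moreover have "p (k1+k2) = W" using 1 2 by (auto simp: p_def)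
  moreover have "\<forall>i<k1+k2. gamma_adj l n (p i) (p (Suc i))"
  proof (intro allI impI)
    fix i assume i: "i < k1+k2"
    show "gamma_adj l n (p i) (p (Suc i))"
    proof (cases "i < k1")
      case True then show ?thesis using 1 by (auto simp: p_def)
    next
      case False
      then have e1: "p i = p2 (i - k1)" using 1 2 by (auto simp: p_def)
      have e2: "p (Suc i) = p2 (Suc (i - k1))" using False by (auto simp: p_def Suc_diff_le)
      show ?thesis unfolding e1 e2 using 2(4) i False by auto
    qed
  qed
  ultimately show ?thesis unfolding path_le_def using 1(1) 2(1)
    by (intro exI[of _ "k1+k2"]) auto
qed

lemma path_sym:
  assumes "path_le l n a V W" shows "path_le l n a W V"
proof -
  from assms obtain k p where 1: "k \<le> a" "p 0 = V" "p k = W" "\<forall>i<k. gamma_adj l n (p i) (p (Suc i))"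
    unfolding path_le_def by blast
  define q where "q i = p (k - i)" for i
  have "\<forall>i<k. gamma_adj l n (q i) (q (Suc i))"
  proof (intro allI impI)
    fix i assume i: "i < k"
    have "gamma_adj l n (p (k - Suc i)) (p (Suc (k - Suc i)))" using 1(4) i by auto
    moreover have "Suc (k - Suc i) = k - i" using i by simp
    ultimately show "gamma_adj l n (q i) (q (Suc i))" unfolding q_def using adj_sym by metis
  qed
  moreover have "q 0 = W" "q k = V" using 1 by (auto simp: q_def)
  ultimately show ?thesis unfolding path_le_def using 1(1) by blast
qed

lemma path_mirror:
  assumes "path_le l n a V W" shows "path_le l n a (mirror V) (mirror W)"
proof -
  from assms obtain k p where 1: "k \<le> a" "p 0 = V" "p k = W" "\<forall>i<k. gamma_adj l n (p i) (p (Suc i))"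
    unfolding path_le_def by blast
  have "\<forall>i<k. gamma_adj l n (mirror (p i)) (mirror (p (Suc i)))" using 1(4) adj_mirror by blast
  then show ?thesis unfolding path_le_def using 1 by (intro exI[of _ k]) auto
qed



lemma gen2:
  assumes gen: "\<forall>J. J \<subseteq> {1..n} \<longrightarrow> (\<Sum>i\<in>J. l i) \<noteq> (\<Sum>i\<in>{1..n} - J. l i)"
    and J: "J \<subseteq> {1..n}"
  shows "sum l J \<noteq> total_len l n / 2"
proof
  assume a: "sum l J = total_len l n / 2"
  have t: "total_len l n = sum l ({1..n} - J) + sum l J"
    unfolding total_len_def using sum.subset_diff[OF J] by simp
  have "sum l J \<noteq> sum l ({1..n} - J)" using gen J by blast
  then show False using t a by linarith
qed

lemma sum_un: fixes l :: "nat \<Rightarrow> real" shows "A \<subseteq> {1..n} \<Longrightarrow> B \<subseteq> {1..(n::nat)} \<Longrightarrow> A \<inter> B = {} \<Longrightarrow> sum l (A \<union> B) = sum l A + sum l B"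
  by (rule sum.union_disjoint) (auto intro: finite_subset)

lemma psum: assumes "admissible l n [X,Y,Z]"
  shows "sum l X + sum l Y + sum l Z = total_len l n"
proof -
  note f = adm3D[OF assms]
  have s: "X \<subseteq> {1..n}" "Y \<subseteq> {1..n}" "Z \<subseteq> {1..n}" "X \<union> Y \<subseteq> {1..n}" using f(4) by blast+
  have d: "(X \<union> Y) \<inter> Z = {}" using f(6,7) by blast
  have "sum l (X\<union>Y\<union>Z) = sum l X + sum l Y + sum l Z"
    using sum_un[OF s(4) s(3) d, of l] sum_un[OF s(1) s(2) f(5), of l] by simp
  then show ?thesis using f(4) unfolding total_len_def by simp
qed

lemma rot_adm: "admissible l n [a,b,c] \<Longrightarrow> admissible l n [b,c,a]" by (rule adm_rot)

lemma Uhelp: "{m}\<union>B\<union>C = U \<Longrightarrow> {m}\<inter>B={} \<Longrightarrow> {m}\<inter>C={} \<Longrightarrow> {m}\<union>B'\<union>C' = U \<Longrightarrow> {m}\<inter>B'={} \<Longrightarrow> {m}\<inter>C'={} \<Longrightarrow> B\<union>C = B'\<union>C'"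
  by blast

lemma L2A:
  assumes pos: "\<forall>i\<in>{1..n}. 0<l i"
    and a1: "admissible l n [{m},B,C]" and a2: "admissible l n [{m},B',C']"
    and d: "B \<inter> C' = {}"
  shows "path_le l n 1 (cyc [{m},B,C]) (cyc [{m},B',C'])"
proof -
  note f1 = adm3D[OF a1] and f2 = adm3D[OF a2]
  have U: "B \<union> C = B' \<union> C'" using Uhelp[OF f1(4,5,6) f2(4,5,6)] .
  show ?thesis
  proof (cases "C \<inter> B' = {}")
    case True
    have "B = B'" "C = C'" using U d True f1(7) f2(7) by blast+
    then show ?thesis using path_refl by simp
  next
    case False
    have ar: "admissible l n [C,{m},B]" using rot_adm[OF rot_adm[OF a1]] .
    have S: "C \<inter> B' \<subseteq> C" "C \<inter> B' \<noteq> {}" by (blast, fact False)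
    have S3: "C \<inter> B' \<noteq> C"
    proof
      assume "C \<inter> B' = C"
      then have "C' = {}" using U d f2(7) by blast
      then show False using f2(3) by simp
    qed
    have e1: "B \<union> (C \<inter> B') = B'" using U d by blast
    have e2: "C - (C \<inter> B') = C'" using U d f2(7) by blast
    have sh: "short l n (B \<union> (C \<inter> B'))" using e1 f2(9) by simp
    from mv2[OF pos ar S S3 sh] have "gamma_adj l n (cyc [C,{m},B]) (cyc [C - C \<inter> B', {m}, B \<union> C \<inter> B'])" by blast
    then have "gamma_adj l n (cyc [{m},B,C]) (cyc [{m},B',C'])"
      unfolding e1 e2 using cyc_rot by metis
    then show ?thesis by (rule path_adj)
  qed
qed

lemma L2B:
  assumes pos: "\<forall>i\<in>{1..n}. 0<l i"
    and a1: "admissible l n [{m},B,C]" and a2: "admissible l n [{m},B',C']"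
    and d: "C \<inter> B' = {}"
  shows "path_le l n 1 (cyc [{m},B,C]) (cyc [{m},B',C'])"
proof -
  note f1 = adm3D[OF a1] and f2 = adm3D[OF a2]
  have U: "B \<union> C = B' \<union> C'" using Uhelp[OF f1(4,5,6) f2(4,5,6)] .
  show ?thesis
  proof (cases "B \<inter> C' = {}")
    case True
    then show ?thesis using L2A[OF pos a1 a2] path_mono by blast
  next
    case False
    have ar: "admissible l n [B,C,{m}]" using rot_adm[OF a1] .
    have S: "B \<inter> C' \<subseteq> B" "B \<inter> C' \<noteq> {}" by (blast, fact False)
    have S3: "B \<inter> C' \<noteq> B"
    proof
      assume "B \<inter> C' = B"
      then have "B' = {}" using U d f2(7) by blast
      then show False using f2(2) by simp
    qed
    have e1: "C \<union> (B \<inter> C') = C'" using U d by blast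
    have e2: "B - (B \<inter> C') = B'" using U d f2(7) by blast
    have sh: "short l n (C \<union> (B \<inter> C'))" using e1 f2(10) by simp
    from mv1[OF pos ar S S3 sh] have "gamma_adj l n (cyc [B,C,{m}]) (cyc [B - B \<inter> C', C \<union> B \<inter> C', {m}])" by blast
    then have "gamma_adj l n (cyc [{m},B,C]) (cyc [{m},B',C'])"
      unfolding e1 e2 using cyc_rot by metis
    then show ?thesis by (rule path_adj)
  qed
qed



lemma path3: "gamma_adj l n A B \<Longrightarrow> gamma_adj l n B C \<Longrightarrow> gamma_adj l n C D \<Longrightarrow> path_le l n 3 A D"
proof -
  assume "gamma_adj l n A B" "gamma_adj l n B C" "gamma_adj l n C D"
  then have "path_le l n (1+1+1) A D" using path_adj path_trans by metis
  then show ?thesis by (simp add: numeral_3_eq_3)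
qed
lemma path2: "gamma_adj l n A B \<Longrightarrow> gamma_adj l n B C \<Longrightarrow> path_le l n 3 A C"
proof -
  assume "gamma_adj l n A B" "gamma_adj l n B C"
  then have "path_le l n (1+1) A C" using path_adj path_trans by metis
  then show ?thesis using path_mono by fastforce
qed

lemma sub_n: "admissible l n [X,Y,Z] \<Longrightarrow> X \<subseteq> {1..n} \<and> Y \<subseteq> {1..n} \<and> Z \<subseteq> {1..n}"
proof -
  assume "admissible l n [X,Y,Z]"
  then have "X\<union>Y\<union>Z = {1..n}" by (rule adm3D(4))
  moreover have "X \<subseteq> X\<union>Y\<union>Z" "Y \<subseteq> X\<union>Y\<union>Z" "Z \<subseteq> X\<union>Y\<union>Z" by blast+
  ultimately show ?thesis by simp
qed

lemma L2C:
  assumes pos: "\<forall>i\<in>{1..n}. 0<l i"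
    and gen: "\<forall>J. J \<subseteq> {1..n} \<longrightarrow> (\<Sum>i\<in>J. l i) \<noteq> (\<Sum>i\<in>{1..n} - J. l i)"
    and a1: "admissible l n [{m},B,C]" and a2: "admissible l n [{m},B',C']"
    and ne: "B\<inter>B' \<noteq> {}" "B\<inter>C' \<noteq> {}" "C\<inter>B' \<noteq> {}" "C\<inter>C' \<noteq> {}"
  shows "path_le l n 3 (cyc [{m},B,C]) (cyc [{m},B',C']) \<or> path_le l n 3 (cyc [{m},B,C]) (cyc [{m},C',B'])"
proof -
  note f1 = adm3D[OF a1] and f2 = adm3D[OF a2]
  have U: "B \<union> C = B' \<union> C'" using Uhelp[OF f1(4,5,6) f2(4,5,6)] .
  have dBC: "B \<inter> C = {}" by (fact f1(7))
  have dBC': "B' \<inter> C' = {}" by (fact f2(7))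
  have mB: "m \<notin> B" "m \<notin> C" using f1(5,6) by blast+
  have sn: "{m} \<subseteq> {1..n}" "B \<subseteq> {1..n}" "C \<subseteq> {1..n}" using sub_n[OF a1] by blast+
  have ar1: "admissible l n [B,C,{m}]" using rot_adm[OF a1] .
  have c0: "cyc [{m},B,C] = cyc [B,C,{m}]" by (rule cyc_rot)
  show ?thesis
  proof (cases "short l n ({m} \<union> B \<inter> B')")
    case True
    have S1: "B \<inter> B' \<subseteq> B" by blast
    have S1': "B \<inter> B' \<noteq> B" proof assume "B \<inter> B' = B" then have "B \<inter> C' = {}" using dBC' by blast
      then show False using ne(2) by simp qed
    from mv2[OF pos ar1 S1 ne(1) S1' True]
    have st1: "gamma_adj l n (cyc [B,C,{m}]) (cyc [B - B \<inter> B', C, {m} \<union> B \<inter> B'])"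
      and ad1: "admissible l n [B - B \<inter> B', C, {m} \<union> B \<inter> B']" by blast+
    have ar2: "admissible l n [C, {m} \<union> B \<inter> B', B - B \<inter> B']" using rot_adm[OF ad1] .
    have S2: "C \<inter> C' \<subseteq> C" by blast
    have S2': "C \<inter> C' \<noteq> C" proof assume "C \<inter> C' = C" then have "C \<inter> B' = {}" using dBC' by blast
      then show False using ne(3) by simp qed
    have e2: "(B - B \<inter> B') \<union> C \<inter> C' = C'" using U dBC dBC' by blast
    have sh2: "short l n ((B - B \<inter> B') \<union> C \<inter> C')" unfolding e2 by (fact f2(10))
    from mv2[OF pos ar2 S2 ne(4) S2' sh2]
    have st2: "gamma_adj l n (cyc [C, {m} \<union> B \<inter> B', B - B \<inter> B']) (cyc [C - C \<inter> C', {m} \<union> B \<inter> B', (B - B \<inter> B') \<union> C \<inter> C'])"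
      and ad2: "admissible l n [C - C \<inter> C', {m} \<union> B \<inter> B', (B - B \<inter> B') \<union> C \<inter> C']" by blast+
    have ar3: "admissible l n [{m} \<union> B \<inter> B', (B - B \<inter> B') \<union> C \<inter> C', C - C \<inter> C']" using rot_adm[OF ad2] .
    have S3: "B \<inter> B' \<subseteq> {m} \<union> B \<inter> B'" by blast
    have S3': "B \<inter> B' \<noteq> {m} \<union> B \<inter> B'" using mB by blast
    have e3: "(C - C \<inter> C') \<union> B \<inter> B' = B'" using U dBC dBC' by blast
    have sh3: "short l n ((C - C \<inter> C') \<union> B \<inter> B')" unfolding e3 by (fact f2(9))
    from mv2[OF pos ar3 S3 ne(1) S3' sh3]
    have st3: "gamma_adj l n (cyc [{m} \<union> B \<inter> B', (B - B \<inter> B') \<union> C \<inter> C', C - C \<inter> C'])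
       (cyc [({m} \<union> B \<inter> B') - B \<inter> B', (B - B \<inter> B') \<union> C \<inter> C', (C - C \<inter> C') \<union> B \<inter> B'])" by blast
    have e4: "({m} \<union> B \<inter> B') - B \<inter> B' = {m}" using mB by blast
    have r1: "cyc [B - B \<inter> B', C, {m} \<union> B \<inter> B'] = cyc [C, {m} \<union> B \<inter> B', B - B \<inter> B']" by (rule cyc_rot)
    have r2: "cyc [C - C \<inter> C', {m} \<union> B \<inter> B', (B - B \<inter> B') \<union> C \<inter> C'] = cyc [{m} \<union> B \<inter> B', (B - B \<inter> B') \<union> C \<inter> C', C - C \<inter> C']" by (rule cyc_rot)
    have "path_le l n 3 (cyc [B,C,{m}]) (cyc [({m} \<union> B \<inter> B') - B \<inter> B', (B - B \<inter> B') \<union> C \<inter> C', (C - C \<inter> C') \<union> B \<inter> B'])"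
      by (rule path3[OF st1[unfolded r1] st2[unfolded r2] st3])
    then have "path_le l n 3 (cyc [{m},B,C]) (cyc [{m},C',B'])"
      unfolding c0 e2 e3 e4 .
    then show ?thesis by blast
  next
    case False
    have sm: "{m} \<union> B \<inter> B' \<subseteq> {1..n}" using sn by blast
    have w1: "sum l ({m} \<union> B \<inter> B') > total_len l n / 2"
      using False gen2[OF gen sm] unfolding short_def by linarith
    have s1: "sum l ({m} \<union> B \<inter> B') = l m + sum l (B \<inter> B')"
      using sum_un[of "{m}" n "B \<inter> B'" l] sn mB by auto
    have Bsplit: "B = (B \<inter> B') \<union> (B \<inter> C')" using U by blast
    have s2: "sum l B = sum l (B \<inter> B') + sum l (B \<inter> C')"
      using sum_un[of "B \<inter> B'" n "B \<inter> C'" l] sn dBC' Bsplit by (metis Int_assoc Int_left_commute Int_empty_right le_infI1)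
    have s3: "sum l (C \<union> B \<inter> C') = sum l C + sum l (B \<inter> C')"
      using sum_un[of C n "B \<inter> C'" l] sn dBC by (metis Int_assoc Int_commute Int_empty_left le_infI1)
    have s4: "sum l {m} + sum l B + sum l C = total_len l n" by (rule psum[OF a1])
    have sh1: "short l n (C \<union> B \<inter> C')" unfolding short_def using w1 s1 s2 s3 s4 by simp
    have S1: "B \<inter> C' \<subseteq> B" by blast
    have S1': "B \<inter> C' \<noteq> B" proof assume "B \<inter> C' = B" then have "B \<inter> B' = {}" using dBC' by blast
      then show False using ne(1) by simp qed
    from mv1[OF pos ar1 S1 ne(2) S1' sh1]
    have st1: "gamma_adj l n (cyc [B,C,{m}]) (cyc [B - B \<inter> C', C \<union> B \<inter> C', {m}])"
      and ad1: "admissible l n [B - B \<inter> C', C \<union> B \<inter> C', {m}]" by blast+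
    have ar2: "admissible l n [C \<union> B \<inter> C', {m}, B - B \<inter> C']" using rot_adm[OF ad1] .
    have S2: "C \<inter> B' \<subseteq> C \<union> B \<inter> C'" by blast
    have S2': "C \<inter> B' \<noteq> C \<union> B \<inter> C'" proof assume "C \<inter> B' = C \<union> B \<inter> C'"
      then have "B \<inter> C' = {}" using dBC' by blast
      then show False using ne(2) by simp qed
    have e2: "(B - B \<inter> C') \<union> C \<inter> B' = B'" using U dBC dBC' by blast
    have e3: "(C \<union> B \<inter> C') - C \<inter> B' = C'" using U dBC dBC' by blast
    have sh2: "short l n ((B - B \<inter> C') \<union> C \<inter> B')" unfolding e2 by (fact f2(9))
    from mv2[OF pos ar2 S2 ne(3) S2' sh2]
    have st2: "gamma_adj l n (cyc [C \<union> B \<inter> C', {m}, B - B \<inter> C']) (cyc [(C \<union> B \<inter> C') - C \<inter> B', {m}, (B - B \<inter> C') \<union> C \<inter> B'])"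
      by blast
    have r1: "cyc [B - B \<inter> C', C \<union> B \<inter> C', {m}] = cyc [C \<union> B \<inter> C', {m}, B - B \<inter> C']" by (rule cyc_rot)
    have r2: "cyc [(C \<union> B \<inter> C') - C \<inter> B', {m}, (B - B \<inter> C') \<union> C \<inter> B'] = cyc [{m}, (B - B \<inter> C') \<union> C \<inter> B', (C \<union> B \<inter> C') - C \<inter> B']" by (rule cyc_rot)
    have "path_le l n 3 (cyc [B,C,{m}]) (cyc [{m}, (B - B \<inter> C') \<union> C \<inter> B', (C \<union> B \<inter> C') - C \<inter> B'])"
      by (rule path2[OF st1[unfolded r1] st2[unfolded r2]])
    then have "path_le l n 3 (cyc [{m},B,C]) (cyc [{m},B',C'])"
      unfolding c0 e2 e3 .
    then show ?thesis by blast
  qed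
qed



lemma L2:
  assumes pos: "\<forall>i\<in>{1..n}. 0<l i"
    and gen: "\<forall>J. J \<subseteq> {1..n} \<longrightarrow> (\<Sum>i\<in>J. l i) \<noteq> (\<Sum>i\<in>{1..n} - J. l i)"
    and a1: "admissible l n [{m},B,C]" and a2: "admissible l n [{m},B',C']"
  shows "path_le l n 3 (cyc [{m},B,C]) (cyc [{m},B',C']) \<or> path_le l n 3 (cyc [{m},B,C]) (cyc [{m},C',B'])"
proof -
  have a2': "admissible l n [{m},C',B']" using rot_adm[OF rot_adm[OF adm_rev[OF a2]]] .
  have m13: "(1::nat) \<le> 3" by simp
  show ?thesis
  proof (cases "B \<inter> C' = {}")
    case True then show ?thesis using L2A[OF pos a1 a2 True] path_mono[OF _ m13] by blast
  next
    case F1: False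
    show ?thesis
    proof (cases "C \<inter> B' = {}")
      case True then show ?thesis using L2B[OF pos a1 a2 True] path_mono[OF _ m13] by blast
    next
      case F2: False
      show ?thesis
      proof (cases "B \<inter> B' = {}")
        case True then show ?thesis using L2A[OF pos a1 a2' True] path_mono[OF _ m13] by blast
      next
        case F3: False
        show ?thesis
        proof (cases "C \<inter> C' = {}")
          case True then show ?thesis using L2B[OF pos a1 a2' True] path_mono[OF _ m13] by blast
        next
          case F4: False
          show ?thesis by (rule L2C[OF pos gen a1 a2 F3 F1 F2 F4])
        qed
      qed
    qed
  qed
qed

lemma finite_argmax:
  fixes f :: "'a \<Rightarrow> real"
  assumes "finite F" "F \<noteq> {}"
  shows "\<exists>x\<in>F. \<forall>y\<in>F. f y \<le> f x"
proof -
  have "Max (f ` F) \<in> f ` F" using assms by simp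
  then obtain x where "x \<in> F" "f x = Max (f ` F)" by auto
  moreover have "\<forall>y\<in>F. f y \<le> Max (f ` F)" using assms by simp
  ultimately show ?thesis by metis
qed

lemma L1:
  assumes pos: "\<forall>i\<in>{1..n}. 0<l i"
    and gen: "\<forall>J. J \<subseteq> {1..n} \<longrightarrow> (\<Sum>i\<in>J. l i) \<noteq> (\<Sum>i\<in>{1..n} - J. l i)"
    and heavy: "\<forall>i\<in>{1..n}. l i \<le> l m"
    and adm: "admissible l n [I,J,K]" and mI: "m \<in> I"
  shows "\<exists>B C. admissible l n [{m},B,C] \<and> path_le l n 2 (cyc [I,J,K]) (cyc [{m},B,C])"
proof -
  note f = adm3D[OF adm]
  have sn: "I \<subseteq> {1..n}" "J \<subseteq> {1..n}" "K \<subseteq> {1..n}" using sub_n[OF adm] by blast+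
  define R where "R = I - {m}"
  have RI: "R \<subseteq> I" "m \<notin> R" unfolding R_def by blast+
  have IR: "I - R = {m}" unfolding R_def using mI by blast
  have m12: "(1::nat) \<le> 2" by simp
  have RneI: "R \<noteq> I" using RI mI by blast
  show ?thesis
  proof (cases "R = {}")
    case True
    then have "I = {m}" using IR by simp
    then show ?thesis using adm path_refl by blast
  next
    case Rne: False
    show ?thesis
    proof (cases "short l n (J \<union> R)")
      case True
      from mv1[OF pos adm RI(1) Rne RneI True] show ?thesis unfolding IR
        using path_adj path_mono[OF _ m12] by blast
    next
      case nJ: False
      show ?thesis
      proof (cases "short l n (K \<union> R)")
        case True
        from mv2[OF pos adm RI(1) Rne RneI True] have
          "gamma_adj l n (cyc [I, J, K]) (cyc [{m}, J, K \<union> R])" "admissible l n [{m}, J, K \<union> R]"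
          unfolding IR by blast+
        then show ?thesis using path_adj path_mono[OF _ m12] by blast
      next
        case nK: False
        define h where "h = total_len l n / 2"
        have Rn: "R \<subseteq> {1..n}" using RI sn by blast
        have finR: "finite R" using Rn finite_subset by blast
        have dJR: "J \<inter> R = {}" "K \<inter> R = {}" using f(5,6) RI(1) by blast+
        have sJR: "sum l (J \<union> R) = sum l J + sum l R" by (rule sum_un[OF sn(2) Rn dJR(1)])
        have sKR: "sum l (K \<union> R) = sum l K + sum l R" by (rule sum_un[OF sn(3) Rn dJR(2)])
        have JRn: "J \<union> R \<subseteq> {1..n}" "K \<union> R \<subseteq> {1..n}" using sn Rn by blast+
        have w1: "sum l J + sum l R > h" using nJ gen2[OF gen JRn(1)] sJR unfolding short_def h_def by linarith
        have w2: "sum l K + sum l R > h" using nK gen2[OF gen JRn(2)] sKR unfolding short_def h_def by linarith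
        have Isplit: "I = {m} \<union> R" "{m} \<inter> R = {}" using mI RI unfolding R_def by blast+
        have mn: "{m} \<subseteq> {1..n}" using mI sn by blast
        have sI: "sum l I = l m + sum l R" using sum_un[OF mn Rn Isplit(2), of l] Isplit(1) by simp
        have tot: "sum l I + sum l J + sum l K = 2 * h" using psum[OF adm] unfolding h_def by simp
        define F where "F = {X. X \<subseteq> R \<and> sum l J + sum l X < h}"
        have finF: "finite F" unfolding F_def using finR by simp
        obtain e0 where e0: "e0 \<in> R" using Rne by blast
        have e0n: "e0 \<in> {1..n}" using e0 Rn by blast
        have "{e0} \<in> F" unfolding F_def using e0 heavy e0n w1 w2 sI tot by force
        then have Fne: "F \<noteq> {}" by blast
        obtain R1 where R1F: "R1 \<in> F" and R1max: "\<forall>Y\<in>F. sum l Y \<le> sum l R1"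
          using finite_argmax[OF finF Fne, of "sum l"] by blast
        have R1R: "R1 \<subseteq> R" and R1s: "sum l J + sum l R1 < h" using R1F unfolding F_def by blast+
        have "sum l {e0} \<le> sum l R1" using R1max \<open>{e0} \<in> F\<close> by blast
        moreover have "l e0 > 0" using pos e0n by blast
        ultimately have R1ne: "R1 \<noteq> {}" by auto
        have R1neR: "R1 \<noteq> R" using R1s w1 by auto
        then obtain e where e: "e \<in> R" "e \<notin> R1" using R1R by blast
        have en: "e \<in> {1..n}" using e Rn by blast
        have R1n: "R1 \<subseteq> {1..n}" using R1R Rn by blast
        have sR1e: "sum l (R1 \<union> {e}) = sum l R1 + l e"
          using sum_un[of R1 n "{e}" l] R1n en e by auto
        have "l e > 0" using pos en by blast
        then have "R1 \<union> {e} \<notin> F" using R1max sR1e by force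
        then have ge: "sum l J + sum l (R1 \<union> {e}) \<ge> h" unfolding F_def using R1R e by auto
        have dJ1: "J \<inter> (R1 \<union> {e}) = {}" using dJR(1) R1R e by blast
        have J1n: "R1 \<union> {e} \<subseteq> {1..n}" using R1n en by blast
        have JR1e: "J \<union> (R1 \<union> {e}) \<subseteq> {1..n}" using sn(2) J1n by blast
        have "sum l (J \<union> (R1 \<union> {e})) \<noteq> h" using gen2[OF gen JR1e] unfolding h_def .
        then have gt: "sum l J + sum l R1 + l e > h" using ge sR1e sum_un[OF sn(2) J1n dJ1, of l] by linarith
        have sdiff: "sum l (R - R1) = sum l R - sum l R1" using sum_diff[OF finR R1R] by simp
        have lel: "l e \<le> l m" using heavy en by blast
        have RR1n: "R - R1 \<subseteq> {1..n}" using Rn by blast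
        have dK: "K \<inter> (R - R1) = {}" using dJR(2) by blast
        have shK: "short l n (K \<union> (R - R1))" unfolding short_def
          using sum_un[OF sn(3) RR1n dK, of l] sdiff gt lel sI tot unfolding h_def by linarith
        have dJ: "J \<inter> R1 = {}" using dJR(1) R1R by blast
        have shJ: "short l n (J \<union> R1)" unfolding short_def
          using sum_un[OF sn(2) R1n dJ, of l] R1s unfolding h_def by linarith
        have R1I: "R1 \<subseteq> I" "R1 \<noteq> I" using R1R RI mI by blast+
        from mv1[OF pos adm R1I(1) R1ne R1I(2) shJ]
        have st1: "gamma_adj l n (cyc [I,J,K]) (cyc [I - R1, J \<union> R1, K])"
          and ad1: "admissible l n [I - R1, J \<union> R1, K]" by blast+
        have S2a: "R - R1 \<subseteq> I - R1" using RI(1) by blast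
        have S2b: "R - R1 \<noteq> {}" using e by blast
        have mm: "m \<in> I - R1" using mI R1R RI(2) by blast
        have mm2: "m \<notin> R - R1" using RI(2) by blast
        have S2c: "R - R1 \<noteq> I - R1" using mm mm2 by blast
        note S2 = S2a S2b S2c
        from mv2[OF pos ad1 S2 shK]
        have st2: "gamma_adj l n (cyc [I - R1, J \<union> R1, K]) (cyc [(I - R1) - (R - R1), J \<union> R1, K \<union> (R - R1)])"
          and ad2: "admissible l n [(I - R1) - (R - R1), J \<union> R1, K \<union> (R - R1)]" by blast+
        have e4: "(I - R1) - (R - R1) = {m}" using Isplit(1) R1R RI(2) by blast
        have "path_le l n (1+1) (cyc [I,J,K]) (cyc [{m}, J \<union> R1, K \<union> (R - R1)])"
          using path_trans[OF path_adj[OF st1] path_adj[OF st2[unfolded e4]]] .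
        then have "path_le l n 2 (cyc [I,J,K]) (cyc [{m}, J \<union> R1, K \<union> (R - R1)])" by (simp add: numeral_2_eq_2)
        then show ?thesis using ad2[unfolded e4] by blast
      qed
    qed
  qed
qed



lemma L1b:
  assumes pos: "\<forall>i\<in>{1..n}. 0<l i"
    and gen: "\<forall>J. J \<subseteq> {1..n} \<longrightarrow> (\<Sum>i\<in>J. l i) \<noteq> (\<Sum>i\<in>{1..n} - J. l i)"
    and heavy: "\<forall>i\<in>{1..n}. l i \<le> l m" and mn: "m \<in> {1..n}"
    and adm: "admissible l n [I,J,K]"
  shows "\<exists>B C. admissible l n [{m},B,C] \<and> path_le l n 2 (cyc [I,J,K]) (cyc [{m},B,C])"
proof -
  have "m \<in> I \<union> J \<union> K" using adm3D(4)[OF adm] mn by simp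
  then consider "m \<in> I" | "m \<in> J" | "m \<in> K" by blast
  then show ?thesis
  proof cases
    case 1 then show ?thesis using L1[OF pos gen heavy adm] by blast
  next
    case 2
    have "cyc [I,J,K] = cyc [J,K,I]" by (rule cyc_rot)
    then show ?thesis using L1[OF pos gen heavy rot_adm[OF adm] 2] by simp
  next
    case 3
    have "cyc [I,J,K] = cyc [K,I,J]" by (metis cyc_rot)
    then show ?thesis using L1[OF pos gen heavy rot_adm[OF rot_adm[OF adm]] 3] by simp
  qed
qed

lemma vert3: "V \<in> gamma_vertices l n \<Longrightarrow> \<exists>a b c. V = cyc [a,b,c] \<and> admissible l n [a,b,c]"
  unfolding gamma_vertices_def using len3 by blast

theorem mainTheorem8:
  fixes l :: "nat \<Rightarrow> real" and n :: nat
  assumes "n \<ge> 4"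
    and "\<forall>i\<in>{1..n}. l i > 0"
    and "\<forall>i\<in>{1..n}. l i < (\<Sum>j\<in>{1..n} - {i}. l j)"
    and "\<forall>J. J \<subseteq> {1..n} \<longrightarrow> (\<Sum>i\<in>J. l i) \<noteq> (\<Sum>i\<in>{1..n} - J. l i)"
    and "V \<in> gamma_vertices l n" and "V' \<in> gamma_vertices l n"
  shows "path_le l n 7 V V' \<or> path_le l n 7 V (mirror V')"
proof -
  have pos: "\<forall>i\<in>{1..n}. 0<l i" using assms(2) by blast
  note gen = assms(4)
  obtain I J K where V: "V = cyc [I,J,K]" "admissible l n [I,J,K]" using vert3[OF assms(5)] by blast
  obtain A B C where W: "V' = cyc [A,B,C]" "admissible l n [A,B,C]" using vert3[OF assms(6)] by blast
  have ne: "{1..n} \<noteq> {}" using assms(1) by simp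
  obtain m where mn: "m \<in> {1..n}" and heavy: "\<forall>i\<in>{1..n}. l i \<le> l m"
    using finite_argmax[OF finite_atLeastAtMost ne, of l] by blast
  obtain B1 C1 where F1: "admissible l n [{m},B1,C1]" "path_le l n 2 V (cyc [{m},B1,C1])"
    using L1b[OF pos gen heavy mn V(2)] V(1) by blast
  obtain B2 C2 where F2: "admissible l n [{m},B2,C2]" "path_le l n 2 V' (cyc [{m},B2,C2])"
    using L1b[OF pos gen heavy mn W(2)] W(1) by blast
  have bk: "path_le l n 2 (cyc [{m},B2,C2]) V'" using path_sym[OF F2(2)] .
  have mir: "mirror (cyc [{m},B2,C2]) = cyc [{m},C2,B2]" unfolding mirror3 by (metis cyc_rot)
  have backm: "path_le l n 2 (cyc [{m},C2,B2]) (mirror V')" using path_mirror[OF bk] unfolding mir .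
  from L2[OF pos gen F1(1) F2(1)] show ?thesis
  proof
    assume "path_le l n 3 (cyc [{m},B1,C1]) (cyc [{m},B2,C2])"
    then have "path_le l n (2+3+2) V V'" using path_trans F1(2) bk by blast
    then show ?thesis by simp
  next
    assume "path_le l n 3 (cyc [{m},B1,C1]) (cyc [{m},C2,B2])"
    then have "path_le l n (2+3+2) V (mirror V')" using path_trans F1(2) backm by blast
    then show ?thesis by simp
  qed
qed

end
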